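(* Let $D\subset\mathbb R^d$ be compact and let $L_1,L_2$ be compact metric spaces. Let $\varphi_i:D\times L_i\to\mathbb R^n$ ($i=1,2$) be continuous maps such that (a) they are $\alpha$-Hölder with respect to $x$: there are $C>0$ and $\alpha\in(0,1]$ with $\|\varphi_i(\xi,x)-\varphi_i(\xi,y)\|\le C\,\rho_i(x,y)^\alpha$ for all $\xi\in D$, $x,y\in L_i$ ($\rho_i$ the metric of $L_i$); and (b) there is $M>0$ such that for all $x_1\in L_1$, $x_2\in L_2$, $\xi,\xi'\in D$, the function $\Phi(\xi,x_1,x_2)=\varphi_1(\xi,x_1)-\varphi_2(\xi,x_2)$ satisfies $\|\Phi(\xi',x_1,x_2)-\Phi(\xi,x_1,x_2)\|\ge M|\xi'-\xi|$. Then $\Delta=\{\xi\in D:\varphi_1(\xi,L_1)\cap\varphi_2(\xi,L_2)\neq\varnothing\}$ is a compact set and $$\dim_H\Delta\le\min\left\{\frac{\dim_H(L_1\times L_2)}{\alpha},\,d\right\}.$$ *)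

theory Defs
  imports "HOL-Analysis.Analysis"
begin

definition hausdorff_content :: "real \<Rightarrow> real \<Rightarrow> 'a::metric_space set \<Rightarrow> ennreal" where
  "hausdorff_content s \<delta> A =
     (INF U \<in> {U :: nat \<Rightarrow> 'a set. A \<subseteq> (\<Union>i. U i) \<and> (\<forall>i. bounded (U i) \<and> diameter (U i) \<le> \<delta>)}.
        (\<Sum>i. ennreal (diameter (U i) powr s)))"

definition hausdorff_measure :: "real \<Rightarrow> 'a::metric_space set \<Rightarrow> ennreal" where
  "hausdorff_measure s A = (SUP \<delta> \<in> {0<..}. hausdorff_content s \<delta> A)"

definition hausdorff_dim :: "'a::metric_space set \<Rightarrow> ereal" where
  "hausdorff_dim A = Inf (ereal ` {s. s > 0 \<and> hausdorff_measure s A = 0})"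

end

theory Submission
  imports Defs
begin


lemma content_le:
  assumes "A \<subseteq> (\<Union>i. U i)" "\<And>i. bounded (U i)" "\<And>i. diameter (U i) \<le> \<delta>"
  shows "hausdorff_content s \<delta> A \<le> (\<Sum>i. ennreal (diameter (U i) powr s))"
  unfolding hausdorff_content_def by (rule INF_lower) (use assms in auto)

lemma hm_zeroI:
  assumes "\<And>\<delta> \<epsilon>. \<delta> > 0 \<Longrightarrow> \<epsilon> > 0 \<Longrightarrow> hausdorff_content s \<delta> A \<le> ennreal \<epsilon>"
  shows "hausdorff_measure s A = 0"
proof -
  have "hausdorff_content s \<delta> A = 0" if "\<delta> > 0" for \<delta>
  proof -
    have "hausdorff_content s \<delta> A \<le> 0"
      by (rule ennreal_le_epsilon) (use assms that in auto)
    then show ?thesis by simp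
  qed
  then show ?thesis unfolding hausdorff_measure_def by simp
qed

lemma hm_zeroD:
  assumes "hausdorff_measure s A = 0" "\<delta> > 0" "\<epsilon> > 0"
  shows "\<exists>U. A \<subseteq> (\<Union>i. U i) \<and> (\<forall>i. bounded (U i) \<and> diameter (U i) \<le> \<delta>) \<and>
     (\<Sum>i. ennreal (diameter (U i) powr s)) < ennreal \<epsilon>"
proof -
  have "hausdorff_content s \<delta> A \<le> hausdorff_measure s A"
    unfolding hausdorff_measure_def by (rule SUP_upper) (use assms in auto)
  then have "hausdorff_content s \<delta> A < ennreal \<epsilon>" using assms by simp
  then show ?thesis unfolding hausdorff_content_def by (subst (asm) INF_less_iff) auto
qed

lemma finite_cover:
  assumes "finite F" "A \<subseteq> \<Union>F" "\<And>V. V \<in> F \<Longrightarrow> bounded V \<and> diameter V \<le> \<delta>" "0 \<le> \<delta>"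
  shows "hausdorff_content s \<delta> A \<le> ennreal (\<Sum>V\<in>F. diameter V powr s)"
proof -
  obtain f where f: "bij_betw f {0..<card F} F" using ex_bij_betw_nat_finite[OF assms(1)] by blast
  define U where "U n = (if n < card F then f n else {})" for n
  have "A \<subseteq> (\<Union>i. U i)"
  proof
    fix x assume "x \<in> A"
    then obtain V where "V \<in> F" "x \<in> V" using assms(2) by blast
    then have "V \<in> f ` {0..<card F}" using f by (simp add: bij_betw_imp_surj_on)
    then obtain n where "n < card F" "f n = V" by auto
    then show "x \<in> (\<Union>i. U i)" using \<open>x \<in> V\<close> unfolding U_def by (intro UN_I[of n]) auto
  qed
  moreover have "bounded (U i) \<and> diameter (U i) \<le> \<delta>" for i
  proof (cases "i < card F")
    case True
    then have "f i \<in> F" using f by (auto simp: bij_betw_apply)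
    then show ?thesis using assms(3) True by (simp add: U_def)
  next
    case False
    then show ?thesis using assms(4) by (simp add: U_def)
  qed
  ultimately have "hausdorff_content s \<delta> A \<le> (\<Sum>i. ennreal (diameter (U i) powr s))"
    by (intro content_le) auto
  also have "\<dots> = (\<Sum>i\<in>{0..<card F}. ennreal (diameter (U i) powr s))"
    by (rule suminf_finite) (auto simp: U_def)
  also have "\<dots> = (\<Sum>i\<in>{0..<card F}. ennreal (diameter (f i) powr s))"
    by (rule sum.cong) (auto simp: U_def)
  also have "\<dots> = (\<Sum>V\<in>F. ennreal (diameter V powr s))"
    using sum.reindex_bij_betw[OF f, of "\<lambda>V. ennreal (diameter V powr s)"] by simp
  also have "\<dots> = ennreal (\<Sum>V\<in>F. diameter V powr s)" by simp
  finally show ?thesis .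
qed


lemma holder_image:
  fixes g :: "'a::metric_space \<Rightarrow> 'b::metric_space"
  assumes H: "\<And>x y. x \<in> A \<Longrightarrow> y \<in> A \<Longrightarrow> dist (g x) (g y) \<le> K * dist x y powr \<alpha>"
    and K: "K > 0" and \<alpha>: "\<alpha> > 0" and s: "s > 0"
    and Z: "hausdorff_measure s A = 0"
  shows "hausdorff_measure (s / \<alpha>) (g ` A) = 0"
proof (rule hm_zeroI)
  fix \<delta> \<epsilon> :: real assume \<delta>: "\<delta> > 0" and \<epsilon>: "\<epsilon> > 0"
  define \<delta>' where "\<delta>' = (\<delta> / K) powr (1 / \<alpha>)"
  have \<delta>'pos: "\<delta>' > 0" using \<delta> K by (simp add: \<delta>'_def)
  have \<delta>'K: "K * \<delta>' powr \<alpha> = \<delta>" using \<delta> K \<alpha> by (simp add: \<delta>'_def powr_powr)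
  define c where "c = K powr (s / \<alpha>)"
  have c: "c > 0" using K by (simp add: c_def)
  have ec: "\<epsilon> / c > 0" using \<epsilon> c by simp
  obtain U where U0: "A \<subseteq> (\<Union>i. U i)" "\<forall>i. bounded (U i) \<and> diameter (U i) \<le> \<delta>'"
    and sU: "(\<Sum>i. ennreal (diameter (U i) powr s)) < ennreal (\<epsilon> / c)"
    using hm_zeroD[OF Z \<delta>'pos ec] by blast
  have U: "A \<subseteq> (\<Union>i. U i)" "\<And>i. bounded (U i)" "\<And>i. diameter (U i) \<le> \<delta>'" using U0 by auto
  define V where "V i = g ` (U i \<inter> A)" for i
  have dV: "dist u v \<le> K * diameter (U i) powr \<alpha>" if uv: "u \<in> V i" "v \<in> V i" for u v i
  proof -
    obtain x where "x \<in> U i \<inter> A" "u = g x" using uv(1) unfolding V_def by blast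
    moreover obtain y where "y \<in> U i \<inter> A" "v = g y" using uv(2) unfolding V_def by blast
    ultimately have "dist u v \<le> K * dist x y powr \<alpha>" using H by auto
    also have "\<dots> \<le> K * diameter (U i) powr \<alpha>"
      using K \<alpha> diameter_bounded_bound[OF U(2) , of x i y] \<open>x \<in> U i \<inter> A\<close> \<open>y \<in> U i \<inter> A\<close>
      by (intro mult_left_mono powr_mono2) auto
    finally show ?thesis .
  qed
  have dV0: "0 \<le> K * diameter (U i) powr \<alpha>" for i using K by simp
  have bV: "bounded (V i)" for i using dV unfolding bounded_two_points by blast
  have diamV: "diameter (V i) \<le> K * diameter (U i) powr \<alpha>" for i
  proof (cases "V i = {}")
    case True
    then show ?thesis using dV0[of i] by simp
  next
    case False
    then have "(SUP (x, y)\<in>V i \<times> V i. dist x y) \<le> K * diameter (U i) powr \<alpha>"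
      by (intro cSUP_least) (auto intro: dV)
    then show ?thesis using False unfolding diameter_def by simp
  qed
  have diamV': "diameter (V i) \<le> \<delta>" for i
  proof -
    have "K * diameter (U i) powr \<alpha> \<le> K * \<delta>' powr \<alpha>"
      using K \<alpha> U(3)[of i] diameter_ge_0[OF U(2)] by (intro mult_left_mono powr_mono2) auto
    then show ?thesis using diamV[of i] \<delta>'K by linarith
  qed
  have cov: "g ` A \<subseteq> (\<Union>i. V i)" using U(1) unfolding V_def by blast
  have "hausdorff_content (s / \<alpha>) \<delta> (g ` A) \<le> (\<Sum>i. ennreal (diameter (V i) powr (s / \<alpha>)))"
    by (rule content_le[OF cov bV diamV'])
  also have "\<dots> \<le> (\<Sum>i. ennreal c * ennreal (diameter (U i) powr s))"
  proof (intro suminf_le allI)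
    fix i
    have "diameter (V i) powr (s / \<alpha>) \<le> (K * diameter (U i) powr \<alpha>) powr (s / \<alpha>)"
      using diamV[of i] diameter_ge_0[OF bV] s \<alpha> by (intro powr_mono2) auto
    also have "\<dots> = c * diameter (U i) powr s"
      using K \<alpha> diameter_ge_0[OF U(2)] by (simp add: c_def powr_mult powr_powr)
    finally show "ennreal (diameter (V i) powr (s / \<alpha>)) \<le> ennreal c * ennreal (diameter (U i) powr s)"
      using c by (simp add: ennreal_mult[symmetric])
  qed auto
  also have "\<dots> = ennreal c * (\<Sum>i. ennreal (diameter (U i) powr s))" by simp
  also have "\<dots> \<le> ennreal c * ennreal (\<epsilon> / c)"
    using sU by (intro mult_left_mono) auto
  also have "\<dots> = ennreal \<epsilon>" using c \<epsilon> by (subst ennreal_mult[symmetric]) auto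
  finally show "hausdorff_content (s / \<alpha>) \<delta> (g ` A) \<le> ennreal \<epsilon>" .
qed


lemma bounded_hm_zero:
  fixes B :: "'d::euclidean_space set"
  assumes "bounded B" and s: "s > real DIM('d)"
  shows "hausdorff_measure s B = 0"
proof (rule hm_zeroI)
  fix \<delta> \<epsilon> :: real assume \<delta>: "\<delta> > 0" and \<epsilon>: "\<epsilon> > 0"
  define d where "d = real DIM('d)"
  have d: "d \<ge> 1" unfolding d_def by simp
  obtain R where R: "R > 0" "\<And>x. x \<in> B \<Longrightarrow> norm x \<le> R"
    using assms(1) bounded_pos by blast
  define c where "c = (2 * R + 3) ^ DIM('d) * d powr s"
  have c: "c > 0" using R d by (simp add: c_def)
  have "((\<lambda>n. real n powr (d - s)) \<longlongrightarrow> 0) sequentially"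
    using s by (intro tendsto_neg_powr filterlim_real_sequentially) (auto simp: d_def)
  then have "((\<lambda>n. c * real n powr (d - s)) \<longlongrightarrow> c * 0) sequentially"
    by (intro tendsto_mult tendsto_const)
  then have "eventually (\<lambda>n. c * real n powr (d - s) < \<epsilon>) sequentially"
    using \<epsilon> by (intro order_tendstoD) auto
  moreover have "eventually (\<lambda>n. n \<ge> nat \<lceil>d / \<delta>\<rceil> + 1) sequentially"
    by (rule eventually_ge_at_top)
  ultimately have "eventually (\<lambda>n. c * real n powr (d - s) < \<epsilon> \<and> n \<ge> nat \<lceil>d / \<delta>\<rceil> + 1) sequentially"
    by (rule eventually_conj)
  then obtain N where N1: "c * real N powr (d - s) < \<epsilon>" and N2: "N \<ge> nat \<lceil>d / \<delta>\<rceil> + 1"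
    unfolding eventually_sequentially by blast
  have Npos: "real N > 0" using N2 by simp
  have dN: "d / real N \<le> \<delta>"
  proof -
    have "d / \<delta> \<le> real N" using N2 by linarith
    then show ?thesis using \<delta> Npos by (simp add: field_simps)
  qed
  define kk where "kk x = restrict (\<lambda>i. \<lfloor>(x \<bullet> i) * real N\<rfloor>) Basis" for x :: 'd
  define m where "m = \<lceil>R * real N\<rceil>"
  have kkB: "kk ` B \<subseteq> PiE Basis (\<lambda>_. {-m..m})"
  proof (clarsimp simp: kk_def)
    fix x i assume "x \<in> B" "i \<in> (Basis :: 'd set)"
    then have "\<bar>x \<bullet> i\<bar> \<le> R" using R(2) Basis_le_norm order_trans by blast
    then have "\<bar>x \<bullet> i * real N\<bar> \<le> R * real N" using Npos by (simp add: abs_mult)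
    then have "- (R * real N) \<le> x \<bullet> i * real N" "x \<bullet> i * real N \<le> R * real N" by auto
    then show "- m \<le> \<lfloor>x \<bullet> i * real N\<rfloor> \<and> \<lfloor>x \<bullet> i * real N\<rfloor> \<le> m"
      unfolding m_def by linarith
  qed
  have finPi: "finite (PiE (Basis :: 'd set) (\<lambda>_. {-m..m}))" by (intro finite_PiE) auto
  define F where "F = (\<lambda>k. {x\<in>B. kk x = k}) ` (kk ` B)"
  have finF: "finite F" unfolding F_def using finite_subset[OF kkB finPi] by blast
  have "card F \<le> card (kk ` B)" unfolding F_def by (rule card_image_le) (use finite_subset[OF kkB finPi] in auto)
  also have "\<dots> \<le> card (PiE (Basis :: 'd set) (\<lambda>_. {-m..m}))" by (rule card_mono[OF finPi kkB])
  also have "\<dots> = (nat (2 * m + 1)) ^ DIM('d)" by (simp add: card_PiE)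
  finally have cardF: "real (card F) \<le> real (nat (2 * m + 1)) ^ DIM('d)"
    by (metis of_nat_le_iff of_nat_power)
  have "real (nat (2 * m + 1)) \<le> (2 * R + 3) * real N"
  proof -
    have "real_of_int m \<le> R * real N + 1" unfolding m_def by linarith
    moreover have "m \<ge> 0" unfolding m_def using mult_pos_pos[OF R(1) Npos] by simp
    moreover have "1 \<le> real N" using N2 by simp
    ultimately show ?thesis using R by (simp add: of_nat_nat distrib_right)
  qed
  then have cardF': "real (card F) \<le> ((2 * R + 3) * real N) ^ DIM('d)"
    using cardF by (meson of_nat_0_le_iff order_trans power_mono)
  have cov: "B \<subseteq> \<Union>F" unfolding F_def by blast
  have Fprop: "bounded V \<and> diameter V \<le> d / real N" if "V \<in> F" for V
  proof
    obtain k where V: "V = {x\<in>B. kk x = k}" using \<open>V \<in> F\<close> unfolding F_def by blast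
    show "bounded V" unfolding V by (rule bounded_subset[OF assms(1)]) auto
    show "diameter V \<le> d / real N"
    proof (rule diameter_le)
      show "V \<noteq> {} \<or> 0 \<le> d / real N" using d Npos by simp
      fix x y assume "x \<in> V" "y \<in> V"
      then have eq: "\<lfloor>(x \<bullet> i) * real N\<rfloor> = \<lfloor>(y \<bullet> i) * real N\<rfloor>" if "i \<in> Basis" for i
        using that unfolding V kk_def by (metis (mono_tags, lifting) mem_Collect_eq restrict_apply')
      have "norm (x - y) \<le> (\<Sum>i\<in>Basis. \<bar>(x - y) \<bullet> i\<bar>)" by (rule norm_le_l1)
      also have "\<dots> \<le> (\<Sum>i\<in>(Basis::'d set). 1 / real N)"
      proof (rule sum_mono)
        fix i :: 'd assume i: "i \<in> Basis"
        have "\<bar>x \<bullet> i * real N - y \<bullet> i * real N\<bar> < 1" 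
        proof -
          have "real_of_int \<lfloor>x \<bullet> i * real N\<rfloor> = real_of_int \<lfloor>y \<bullet> i * real N\<rfloor>" using eq[OF i] by simp
          then show ?thesis using floor_correct[of "x \<bullet> i * real N"] floor_correct[of "y \<bullet> i * real N"]
            by linarith
        qed
        moreover have "(x - y) \<bullet> i * real N = x \<bullet> i * real N - y \<bullet> i * real N"
          by (simp add: inner_diff_left left_diff_distrib)
        ultimately have "\<bar>(x - y) \<bullet> i\<bar> * real N < 1" using Npos
          by (metis abs_mult abs_of_pos)
        then show "\<bar>(x - y) \<bullet> i\<bar> \<le> 1 / real N" using Npos by (simp add: pos_le_divide_eq)
      qed
      also have "\<dots> = d / real N" by (simp add: d_def)
      finally show "norm (x - y) \<le> d / real N" .
    qed
  qed
  have "hausdorff_content s \<delta> B \<le> hausdorff_content s (d / real N) B"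
    unfolding hausdorff_content_def by (intro INF_superset_mono) (auto intro: order_trans[OF _ dN])
  also have "\<dots> \<le> ennreal (\<Sum>V\<in>F. diameter V powr s)"
    by (rule finite_cover[OF finF cov Fprop]) (use d Npos in auto)
  also have "(\<Sum>V\<in>F. diameter V powr s) \<le> (\<Sum>V\<in>F. (d / real N) powr s)"
    using Fprop s d by (intro sum_mono powr_mono2) (auto simp: diameter_ge_0)
  also have "\<dots> = real (card F) * (d / real N) powr s" by simp
  also have "\<dots> \<le> ((2 * R + 3) * real N) ^ DIM('d) * (d / real N) powr s"
    by (intro mult_right_mono cardF') auto
  also have "\<dots> = c * real N powr (d - s)"
  proof -
    have "real N ^ DIM('d) = real N powr d" using Npos by (simp add: d_def powr_realpow)
    moreover have "(d / real N) powr s = d powr s / real N powr s" using d Npos by (simp add: powr_divide)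
    moreover have "real N powr (d - s) = real N powr d / real N powr s" by (simp add: powr_diff)
    ultimately show ?thesis unfolding c_def power_mult_distrib by (simp add: field_simps)
  qed
  also have "\<dots> \<le> \<epsilon>" using N1 by simp
  finally show "hausdorff_content s \<delta> B \<le> ennreal \<epsilon>" by (simp add: ennreal_leI)
qed


lemma hm_mono:
  assumes "A \<subseteq> B" "hausdorff_measure s B = 0"
  shows "hausdorff_measure s A = 0"
proof (rule hm_zeroI)
  fix \<delta> \<epsilon> :: real assume "\<delta> > 0" "\<epsilon> > 0"
  then obtain U where U: "B \<subseteq> (\<Union>i. U i)" "\<forall>i. bounded (U i) \<and> diameter (U i) \<le> \<delta>"
    "(\<Sum>i. ennreal (diameter (U i) powr s)) < ennreal \<epsilon>"
    using hm_zeroD[OF assms(2)] by blast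
  have "hausdorff_content s \<delta> A \<le> (\<Sum>i. ennreal (diameter (U i) powr s))"
    by (rule content_le) (use U assms(1) in auto)
  then show "hausdorff_content s \<delta> A \<le> ennreal \<epsilon>" using U(3) by simp
qed

theorem theorem13:
  fixes D :: "'d::euclidean_space set"
    and L1 :: "'a::metric_space set" and L2 :: "'b::metric_space set"
    and \<phi>1 :: "'d \<Rightarrow> 'a \<Rightarrow> 'n::euclidean_space"
    and \<phi>2 :: "'d \<Rightarrow> 'b \<Rightarrow> 'n"
    and C \<alpha> M :: real
  assumes "compact D" and "compact L1" and "compact L2"
    and "continuous_on (D \<times> L1) (\<lambda>(\<xi>, x). \<phi>1 \<xi> x)"
    and "continuous_on (D \<times> L2) (\<lambda>(\<xi>, x). \<phi>2 \<xi> x)"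
    and "C > 0" and "0 < \<alpha>" and "\<alpha> \<le> 1"
    and "\<forall>\<xi>\<in>D. \<forall>x\<in>L1. \<forall>y\<in>L1. norm (\<phi>1 \<xi> x - \<phi>1 \<xi> y) \<le> C * dist x y powr \<alpha>"
    and "\<forall>\<xi>\<in>D. \<forall>x\<in>L2. \<forall>y\<in>L2. norm (\<phi>2 \<xi> x - \<phi>2 \<xi> y) \<le> C * dist x y powr \<alpha>"
    and "M > 0"
    and "\<forall>x1\<in>L1. \<forall>x2\<in>L2. \<forall>\<xi>\<in>D. \<forall>\<xi>'\<in>D.
           norm ((\<phi>1 \<xi>' x1 - \<phi>2 \<xi>' x2) - (\<phi>1 \<xi> x1 - \<phi>2 \<xi> x2)) \<ge> M * norm (\<xi>' - \<xi>)"
  shows "compact {\<xi>\<in>D. \<phi>1 \<xi> ` L1 \<inter> \<phi>2 \<xi> ` L2 \<noteq> {}} \<and>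
         hausdorff_dim {\<xi>\<in>D. \<phi>1 \<xi> ` L1 \<inter> \<phi>2 \<xi> ` L2 \<noteq> {}}
           \<le> min (hausdorff_dim (L1 \<times> L2) / ereal \<alpha>) (ereal (real DIM('d)))"
proof -
  note D = assms(1) and L1 = assms(2) and L2 = assms(3) and cont1 = assms(4) and cont2 = assms(5)
    and C = assms(6) and \<alpha> = assms(7) and H1 = assms(9) and H2 = assms(10) and M = assms(11)
    and Mb = assms(12)
  define \<Delta> where "\<Delta> = {\<xi>\<in>D. \<phi>1 \<xi> ` L1 \<inter> \<phi>2 \<xi> ` L2 \<noteq> {}}"
  define K where "K = D \<times> (L1 \<times> L2)"
  define f where "f q = \<phi>1 (fst q) (fst (snd q)) - \<phi>2 (fst q) (snd (snd q))" for q :: "'d \<times> 'a \<times> 'b"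
  have Kc: "compact K" unfolding K_def using D L1 L2 by (intro compact_Times)
  have c1: "continuous_on K (\<lambda>q. (\<lambda>(\<xi>, x). \<phi>1 \<xi> x) (fst q, fst (snd q)))"
    by (rule continuous_on_compose2[OF cont1]) (auto simp: K_def intro!: continuous_intros)
  have c2: "continuous_on K (\<lambda>q. (\<lambda>(\<xi>, x). \<phi>2 \<xi> x) (fst q, snd (snd q)))"
    by (rule continuous_on_compose2[OF cont2]) (auto simp: K_def intro!: continuous_intros)
  have cf: "continuous_on K f" unfolding f_def using continuous_on_diff[OF c1 c2] by simp
  have T: "compact {q\<in>K. f q = 0}"
  proof -
    have "closed {q\<in>K. f q = 0}"
      by (rule continuous_closed_preimage_constant[OF cf compact_imp_closed[OF Kc]])
    then have "compact (K \<inter> {q\<in>K. f q = 0})" using Kc by (intro compact_Int_closed)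
    moreover have "K \<inter> {q\<in>K. f q = 0} = {q\<in>K. f q = 0}" by blast
    ultimately show ?thesis by simp
  qed
  have \<Delta>K: "\<Delta> = fst ` {q\<in>K. f q = 0}"
  proof safe
    fix \<xi> assume "\<xi> \<in> \<Delta>"
    then obtain x1 x2 where "\<xi> \<in> D" "x1 \<in> L1" "x2 \<in> L2" "\<phi>1 \<xi> x1 = \<phi>2 \<xi> x2"
      unfolding \<Delta>_def by force
    then show "\<xi> \<in> fst ` {q\<in>K. f q = 0}"
      by (intro image_eqI[of _ _ "(\<xi>, x1, x2)"]) (auto simp: K_def f_def)
  next
    fix \<xi> x1 x2 assume "(\<xi>, x1, x2) \<in> K" "f (\<xi>, x1, x2) = 0"
    then show "fst (\<xi>, x1, x2) \<in> \<Delta>" unfolding \<Delta>_def K_def f_def by force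
  qed
  have cfst: "continuous_on {q\<in>K. f q = 0} fst" by (intro continuous_intros)
  have compD: "compact \<Delta>" unfolding \<Delta>K by (rule compact_continuous_image[OF cfst T])
  have key: "M * norm (\<xi>' - \<xi>) \<le> (2 * C) * dist (x1, x2) (y1, y2) powr \<alpha>"
    if "x1 \<in> L1" "y1 \<in> L1" "x2 \<in> L2" "y2 \<in> L2" "\<xi> \<in> D" "\<xi>' \<in> D"
      "\<phi>1 \<xi> x1 = \<phi>2 \<xi> x2" "\<phi>1 \<xi>' y1 = \<phi>2 \<xi>' y2" for x1 y1 x2 y2 \<xi> \<xi>'
  proof -
    have "M * norm (\<xi>' - \<xi>) \<le> norm ((\<phi>1 \<xi>' x1 - \<phi>2 \<xi>' x2) - (\<phi>1 \<xi> x1 - \<phi>2 \<xi> x2))"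
      using Mb that by blast
    also have "\<dots> = norm ((\<phi>1 \<xi>' x1 - \<phi>1 \<xi>' y1) - (\<phi>2 \<xi>' x2 - \<phi>2 \<xi>' y2))"
      using that(7,8) by (simp add: algebra_simps)
    also have "\<dots> \<le> norm (\<phi>1 \<xi>' x1 - \<phi>1 \<xi>' y1) + norm (\<phi>2 \<xi>' x2 - \<phi>2 \<xi>' y2)"
      by (rule norm_triangle_ineq4)
    also have "\<dots> \<le> C * dist x1 y1 powr \<alpha> + C * dist x2 y2 powr \<alpha>"
      using H1 H2 that(1-6) by (intro add_mono) auto
    also have "\<dots> \<le> C * dist (x1, x2) (y1, y2) powr \<alpha> + C * dist (x1, x2) (y1, y2) powr \<alpha>"
      using C \<alpha> dist_fst_le[of "(x1, x2)" "(y1, y2)"] dist_snd_le[of "(x1, x2)" "(y1, y2)"]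
      by (intro add_mono mult_left_mono powr_mono2) auto
    finally show ?thesis by simp
  qed
  define S where "S = {p \<in> L1 \<times> L2. \<exists>\<xi>\<in>D. \<phi>1 \<xi> (fst p) = \<phi>2 \<xi> (snd p)}"
  define g where "g p = (SOME \<xi>. \<xi> \<in> D \<and> \<phi>1 \<xi> (fst p) = \<phi>2 \<xi> (snd p))" for p
  have g: "g p \<in> D \<and> \<phi>1 (g p) (fst p) = \<phi>2 (g p) (snd p)" if "p \<in> S" for p
    using that unfolding S_def g_def by (metis (mono_tags, lifting) mem_Collect_eq someI_ex)
  have gH: "dist (g p) (g q) \<le> (2 * C / M) * dist p q powr \<alpha>" if "p \<in> S" "q \<in> S" for p q
  proof -
    obtain x1 x2 where p: "p = (x1, x2)" by (cases p)
    obtain y1 y2 where q: "q = (y1, y2)" by (cases q)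
    have "M * norm (g q - g p) \<le> (2 * C) * dist p q powr \<alpha>"
      using key[of x1 y1 x2 y2 "g p" "g q"] g[OF that(1)] g[OF that(2)] that
      unfolding p q S_def by auto
    then show ?thesis using M by (simp add: dist_norm norm_minus_commute field_simps)
  qed
  have \<Delta>S: "\<Delta> = g ` S"
  proof safe
    fix \<xi> assume "\<xi> \<in> \<Delta>"
    then obtain x1 x2 where x: "\<xi> \<in> D" "x1 \<in> L1" "x2 \<in> L2" "\<phi>1 \<xi> x1 = \<phi>2 \<xi> x2"
      unfolding \<Delta>_def by force
    then have pS: "(x1, x2) \<in> S" unfolding S_def by auto
    have "M * norm (g (x1, x2) - \<xi>) \<le> (2 * C) * dist (x1, x2) (x1, x2) powr \<alpha>"
      using key[of x1 x1 x2 x2 \<xi> "g (x1, x2)"] x g[OF pS] by auto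
    then have "norm (g (x1, x2) - \<xi>) \<le> 0" using M
      by (simp add: mult_le_0_iff)
    then have "\<xi> = g (x1, x2)" by simp
    then show "\<xi> \<in> g ` S" using pS by blast
  next
    fix p assume "p \<in> S"
    then show "g p \<in> \<Delta>" using g[of p] unfolding S_def \<Delta>_def by force
  qed
  define SL where "SL = {s. s > 0 \<and> hausdorff_measure s (L1 \<times> L2) = 0}"
  define SD where "SD = {s. s > 0 \<and> hausdorff_measure s \<Delta> = 0}"
  have A: "s / \<alpha> \<in> SD" if "s \<in> SL" for s
  proof -
    have sp: "s > 0" and z: "hausdorff_measure s (L1 \<times> L2) = 0" using that unfolding SL_def by auto
    have "hausdorff_measure s S = 0" by (rule hm_mono[OF _ z]) (auto simp: S_def)
    then have "hausdorff_measure (s / \<alpha>) (g ` S) = 0"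
      using C M \<alpha> sp by (intro holder_image[of S g "2 * C / M"] gH) auto
    then show ?thesis unfolding SD_def \<Delta>S using sp \<alpha> by simp
  qed
  have B: "s \<in> SD" if "s > real DIM('d)" for s
  proof -
    have "bounded \<Delta>" using compD compact_imp_bounded by blast
    then show ?thesis unfolding SD_def using bounded_hm_zero[of \<Delta> s] that by simp
  qed
  define dd where "dd = Inf (ereal ` SD)"
  have dd_def': "hausdorff_dim \<Delta> = dd" unfolding dd_def SD_def hausdorff_dim_def ..
  have dL: "hausdorff_dim (L1 \<times> L2) = Inf (ereal ` SL)" unfolding SL_def hausdorff_dim_def ..
  have i1: "dd \<le> Inf (ereal ` SL) / ereal \<alpha>"
  proof -
    have "ereal \<alpha> * dd \<le> Inf (ereal ` SL)"
    proof (rule Inf_greatest)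
      fix y assume "y \<in> ereal ` SL"
      then obtain s where s: "s \<in> SL" "y = ereal s" by blast
      have "dd \<le> ereal (s / \<alpha>)" unfolding dd_def using A[OF s(1)] by (intro Inf_lower) auto
      then have "ereal \<alpha> * dd \<le> ereal \<alpha> * ereal (s / \<alpha>)" using \<alpha> by (intro ereal_mult_left_mono) auto
      also have "\<dots> = y" using \<alpha> s(2) by simp
      finally show "ereal \<alpha> * dd \<le> y" .
    qed
    then show ?thesis using \<alpha> by (subst ereal_le_divide_pos) auto
  qed
  have i2: "dd \<le> ereal (real DIM('d))"
  proof (rule dense_ge)
    fix y assume y: "ereal (real DIM('d)) < y"
    show "dd \<le> y"
    proof (cases y)
      case (real r)
      then have "r \<in> SD" using B y by simp
      then show ?thesis unfolding dd_def real by (intro Inf_lower) auto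
    next
      case PInf
      then show ?thesis by simp
    next
      case MInf
      then show ?thesis using y by simp
    qed
  qed
  show ?thesis using compD i1 i2 unfolding \<Delta>_def[symmetric] dd_def' dL by simp
qed

end
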